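(* Let $n\ge 1$, $m\ge 2$, $0\le k\le n-1$ with $(m,k)\ne(2,0)$. Then the class $\mathcal{C}^k_{ac}$ of all complete $k$-bounded acyclic CP-nets over $n$ variables of domain size $m$, over the instance space $\mathcal{X}_{swap}$, is not maximal; in particular, it is not maximum.
   Context: Variables $V=\{v_1,\dots,v_n\}$, each with a finite domain of size $m$. An outcome assigns a value to every variable; $\mathcal{O}_X$ denotes assignments to $X\subseteq V$. A complete CP-net specifies for each $v_i$ a parent set $Pa(v_i)\subseteq V\setminus\{v_i\}$ and, for each context $\gamma\in\mathcal{O}_{Pa(v_i)}$, a strict total order $\succ^{v_i}_\gamma$ on $D_{v_i}$; parents are non-dummy. Acyclic: graph with edges $(v_j,v_i)$, $v_j\in Pa(v_i)$, acyclic; $k$-bounded: all $|Pa(v_i)|\le k$. Improving flip: changing only $v_i$ to a value preferred under $\succ^{v_i}_{o[Pa(v_i)]}$; $o'\succ o$ iff a nonempty sequence of improving flips leads from $o$ to $o'$. A swap is an ordered pair $x=(x.1,x.2)$ of outcomes differing in exactly one variable; $\mathcal{X}_{swap}$ contains exactly one ordering of each such pair (fixed arbitrarily); a CP-net $N$ is the concept $c_N(x)=1$ iff $x.1\succ x.2$. For a finite class $\mathcal{C}$ over instance space $\mathcal{X}$ with VC dimension $d$: $\mathcal{C}$ is maximum if $|\mathcal{C}|=\sum_{i=0}^d\binom{|\mathcal{X}|}{i}$; $\mathcal{C}$ is maximal if adding any concept over $\mathcal{X}$ not in $\mathcal{C}$ increases the VC dimension. *)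

theory Defs
  imports Main
begin

definition outcomes :: "nat \<Rightarrow> nat \<Rightarrow> nat list set" where
  "outcomes n m = {u. length u = n \<and> (\<forall>i<n. u ! i < m)}"

text \<open>A CP-net is given by a parent function Pa and, for each variable i and outcome u,
  a relation ord i u on the domain, where (a, b) in ord i u means a is preferred to b
  under the context u restricted to Pa i.  We require ord i u to depend only on the
  parent values of u (so it is a CPT indexed by contexts in O_Pa(i)).\<close>

definition cpnet :: "nat \<Rightarrow> nat \<Rightarrow> (nat \<Rightarrow> nat set) \<Rightarrow> (nat \<Rightarrow> nat list \<Rightarrow> (nat \<times> nat) set) \<Rightarrow> bool" where
  "cpnet n m Pa ord \<longleftrightarrow>
     (\<forall>i<n. Pa i \<subseteq> {0..<n} - {i}) \<and>
     (\<forall>i<n. \<forall>u\<in>outcomes n m.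
        ord i u \<subseteq> {0..<m} \<times> {0..<m} \<and> strict_linear_order_on {0..<m} (ord i u)) \<and>
     (\<forall>i<n. \<forall>u\<in>outcomes n m. \<forall>u'\<in>outcomes n m.
        (\<forall>j\<in>Pa i. u ! j = u' ! j) \<longrightarrow> ord i u = ord i u') \<and>
     (\<forall>i<n. \<forall>j\<in>Pa i. \<exists>u\<in>outcomes n m. \<exists>a<m. ord i u \<noteq> ord i (u[j := a]))"

definition cp_acyclic :: "nat \<Rightarrow> (nat \<Rightarrow> nat set) \<Rightarrow> bool" where
  "cp_acyclic n Pa \<longleftrightarrow> acyclic {(j, i). i < n \<and> j \<in> Pa i}"

definition k_bounded :: "nat \<Rightarrow> nat \<Rightarrow> (nat \<Rightarrow> nat set) \<Rightarrow> bool" where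
  "k_bounded n k Pa \<longleftrightarrow> (\<forall>i<n. card (Pa i) \<le> k)"

definition improving_flip :: "nat \<Rightarrow> nat \<Rightarrow> (nat \<Rightarrow> nat list \<Rightarrow> (nat \<times> nat) set) \<Rightarrow> (nat list \<times> nat list) set" where
  "improving_flip n m ord =
     {(u, u'). u \<in> outcomes n m \<and> (\<exists>i<n. \<exists>a<m. u' = u[i := a] \<and> (a, u ! i) \<in> ord i u)}"

definition cp_prefers :: "nat \<Rightarrow> nat \<Rightarrow> (nat \<Rightarrow> nat list \<Rightarrow> (nat \<times> nat) set) \<Rightarrow> nat list \<Rightarrow> nat list \<Rightarrow> bool" where
  "cp_prefers n m ord u' u \<longleftrightarrow> (u, u') \<in> (improving_flip n m ord)\<^sup>+"

definition is_swap :: "nat \<Rightarrow> nat \<Rightarrow> nat list \<times> nat list \<Rightarrow> bool" where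
  "is_swap n m x \<longleftrightarrow> fst x \<in> outcomes n m \<and> snd x \<in> outcomes n m \<and>
      card {i. i < n \<and> fst x ! i \<noteq> snd x ! i} = 1"

definition swap_space :: "nat \<Rightarrow> nat \<Rightarrow> (nat list \<times> nat list) set \<Rightarrow> bool" where
  "swap_space n m X \<longleftrightarrow> (\<forall>x\<in>X. is_swap n m x) \<and>
     (\<forall>o1 o2. is_swap n m (o1, o2) \<longrightarrow> ((o1, o2) \<in> X \<longleftrightarrow> (o2, o1) \<notin> X))"

text \<open>Concepts over X are identified with the set of instances labelled 1.\<close>
definition cp_concept :: "nat \<Rightarrow> nat \<Rightarrow> (nat \<Rightarrow> nat list \<Rightarrow> (nat \<times> nat) set) \<Rightarrow> (nat list \<times> nat list) set \<Rightarrow> (nat list \<times> nat list) set" where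
  "cp_concept n m ord X = {x \<in> X. cp_prefers n m ord (fst x) (snd x)}"

definition C_ac :: "nat \<Rightarrow> nat \<Rightarrow> nat \<Rightarrow> (nat list \<times> nat list) set \<Rightarrow> (nat list \<times> nat list) set set" where
  "C_ac n m k X = {cp_concept n m ord X | Pa ord.
       cpnet n m Pa ord \<and> cp_acyclic n Pa \<and> k_bounded n k Pa}"

definition shatters :: "'x set set \<Rightarrow> 'x set \<Rightarrow> bool" where
  "shatters C S \<longleftrightarrow> (\<forall>T\<subseteq>S. \<exists>c\<in>C. c \<inter> S = T)"

definition vcdim :: "'x set set \<Rightarrow> 'x set \<Rightarrow> nat" where
  "vcdim C X = Max {card S | S. S \<subseteq> X \<and> shatters C S}"

definition maximum_class :: "'x set set \<Rightarrow> 'x set \<Rightarrow> bool" where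
  "maximum_class C X \<longleftrightarrow> card C = (\<Sum>i\<le>vcdim C X. card X choose i)"

definition maximal_class :: "'x set set \<Rightarrow> 'x set \<Rightarrow> bool" where
  "maximal_class C X \<longleftrightarrow> (\<forall>c. c \<subseteq> X \<and> c \<notin> C \<longrightarrow> vcdim (insert c C) X > vcdim C X)"

end

theory Submission
  imports Defs
begin


lemma flip_out:
  assumes "(u, w) \<in> improving_flip n m ord"
  shows "u \<in> outcomes n m" "w \<in> outcomes n m"
  using assms by (auto simp: improving_flip_def outcomes_def nth_list_update)

lemma consistent:
  assumes net: "cpnet n m Pa ord" and acy: "cp_acyclic n Pa"
  shows "(u, u) \<notin> (improving_flip n m ord)\<^sup>+"
proof
  let ?F = "improving_flip n m ord"
  assume "(u, u) \<in> ?F\<^sup>+"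
  then obtain k where k0: "k > 0" and "(u, u) \<in> ?F ^^ k" by (auto simp: trancl_power)
  then obtain f where f0: "f 0 = u" and fk: "f k = u" and fs: "\<forall>t<k. (f t, f (Suc t)) \<in> ?F"
    by (auto simp: relpow_fun_conv)
  from net have sub: "\<forall>i<n. Pa i \<subseteq> {0..<n} - {i}"
    and slo: "\<forall>i<n. \<forall>u\<in>outcomes n m. ord i u \<subseteq> {0..<m} \<times> {0..<m} \<and> strict_linear_order_on {0..<m} (ord i u)"
    and ctx: "\<forall>i<n. \<forall>u\<in>outcomes n m. \<forall>u'\<in>outcomes n m. (\<forall>j\<in>Pa i. u ! j = u' ! j) \<longrightarrow> ord i u = ord i u'"
    unfolding cpnet_def by blast+
  have step: "f t \<in> outcomes n m \<and> (\<exists>j<n. \<exists>a<m. f (Suc t) = (f t)[j := a] \<and> (a, f t ! j) \<in> ord j (f t))"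
    if "t < k" for t using fs that by (auto simp: improving_flip_def)
  have out: "f t \<in> outcomes n m" if "t \<le> k" for t
  proof (cases "t < k")
    case True then show ?thesis using step by blast
  next
    case False then have "t = k" using that by simp
    then show ?thesis using step[of 0] k0 f0 fk by simp
  qed
  have len: "length (f t) = n" if "t \<le> k" for t using out[OF that] by (simp add: outcomes_def)
  define V where "V = {j. \<exists>t<k. f (Suc t) ! j \<noteq> f t ! j}"
  have "V \<noteq> {}"
  proof -
    obtain j a where j: "j < n" "a < m" "f 1 = (f 0)[j := a]" "(a, f 0 ! j) \<in> ord j (f 0)"
      using step[of 0] k0 by auto
    have "irrefl (ord j (f 0))" using slo j(1) out[of 0]
      by (auto simp: strict_linear_order_on_def)
    then have "a \<noteq> f 0 ! j" using j(4) by (auto simp: irrefl_def)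
    moreover have "f 1 ! j = a" using j len[of 0] by simp
    ultimately have "j \<in> V" using k0 unfolding V_def by (intro CollectI exI[of _ 0]) simp
    then show ?thesis by blast
  qed
  then obtain i0 where "i0 \<in> V" by blast
  define E where "E = {(j, i). i < n \<and> j \<in> Pa i}"
  have "finite E"
  proof (rule finite_subset)
    show "E \<subseteq> {0..<n} \<times> {0..<n}" using sub unfolding E_def by auto
  qed simp
  moreover have "acyclic E" using acy unfolding cp_acyclic_def E_def by simp
  ultimately have "wf E" by (rule finite_acyclic_wf)
  then obtain i where iV: "i \<in> V" and imin: "\<forall>y. (y, i) \<in> E \<longrightarrow> y \<notin> V"
    using wfE_min[OF _ \<open>i0 \<in> V\<close>] by metis
  have "i < n"
  proof (rule ccontr)
    assume "\<not> i < n"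
    from iV obtain t where t: "t < k" "f (Suc t) ! i \<noteq> f t ! i" unfolding V_def by blast
    from step[OF t(1)] obtain j a where "j < n" "f (Suc t) = (f t)[j := a]" by blast
    with t \<open>\<not> i < n\<close> show False by simp
  qed
  have par: "f t ! j = f 0 ! j" if "j \<in> Pa i" "t \<le> k" for j t
    using that(2)
  proof (induction t)
    case 0 then show ?case by simp
  next
    case (Suc t)
    have "j \<notin> V" using imin that(1) \<open>i < n\<close> unfolding E_def by blast
    then have "f (Suc t) ! j = f t ! j" using Suc.prems unfolding V_def by auto
    then show ?case using Suc by simp
  qed
  have R: "ord i (f t) = ord i (f 0)" if "t \<le> k" for t
  proof -
    have "\<forall>j\<in>Pa i. f t ! j = f 0 ! j" using par that by blast
    then show ?thesis using ctx \<open>i < n\<close> out[OF that] out[of 0] by blast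
  qed
  have slo0: "strict_linear_order_on {0..<m} (ord i (f 0))" using slo \<open>i < n\<close> out[of 0] by blast
  have main: "(f t ! i = f 0 ! i \<and> (\<forall>s<t. f (Suc s) ! i = f s ! i)) \<or> (f t ! i, f 0 ! i) \<in> ord i (f 0)"
    if "t \<le> k" for t
    using that
  proof (induction t)
    case 0 then show ?case by simp
  next
    case (Suc t)
    then have tk: "t < k" by simp
    from step[OF tk] obtain j a where j: "j < n" "a < m" "f (Suc t) = (f t)[j := a]" "(a, f t ! j) \<in> ord j (f t)"
      by blast
    have IH: "(f t ! i = f 0 ! i \<and> (\<forall>s<t. f (Suc s) ! i = f s ! i)) \<or> (f t ! i, f 0 ! i) \<in> ord i (f 0)"
      using Suc by simp
    show ?case
    proof (cases "j = i")
      case True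
      then have a: "f (Suc t) ! i = a" "(a, f t ! i) \<in> ord i (f 0)"
        using j len[of t] tk R[of t] by auto
      have "trans (ord i (f 0))" using slo0 by (simp add: strict_linear_order_on_def)
      then have "(f (Suc t) ! i, f 0 ! i) \<in> ord i (f 0)" using IH a by (metis transD)
      then show ?thesis by blast
    next
      case False
      then have "f (Suc t) ! i = f t ! i" using j by simp
      then show ?thesis using IH less_Suc_eq by auto
    qed
  qed
  from iV obtain t where "t < k" "f (Suc t) ! i \<noteq> f t ! i" unfolding V_def by blast
  then have "(f k ! i, f 0 ! i) \<in> ord i (f 0)" using main[of k] by auto
  then have "(f 0 ! i, f 0 ! i) \<in> ord i (f 0)" using f0 fk by simp
  then show False using slo0 by (auto simp: strict_linear_order_on_def irrefl_def)
qed

lemma upd_out: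
  assumes "u \<in> outcomes n m" "a < m"
  shows "u[i := a] \<in> outcomes n m"
  using assms by (cases "i < length u") (auto simp: outcomes_def nth_list_update)

lemma ord_upd:
  assumes net: "cpnet n m Pa ord" and u: "u \<in> outcomes n m" and "i < n" "a < m"
  shows "ord i (u[i := a]) = ord i u"
proof -
  have sub: "Pa i \<subseteq> {0..<n} - {i}" and ctx: "\<forall>u\<in>outcomes n m. \<forall>u'\<in>outcomes n m. (\<forall>j\<in>Pa i. u ! j = u' ! j) \<longrightarrow> ord i u = ord i u'"
    using net \<open>i < n\<close> unfolding cpnet_def by blast+
  have "\<forall>j\<in>Pa i. u[i := a] ! j = u ! j"
  proof
    fix j assume "j \<in> Pa i"
    then have "j \<noteq> i" using sub by blast
    then show "u[i := a] ! j = u ! j" by simp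
  qed
  then show ?thesis using ctx upd_out[OF u \<open>a < m\<close>] u by blast
qed

lemma swap_flip:
  assumes net: "cpnet n m Pa ord" and sw: "is_swap n m (o1, o2)"
  shows "(o2, o1) \<in> improving_flip n m ord \<or> (o1, o2) \<in> improving_flip n m ord"
proof -
  from sw have o1: "o1 \<in> outcomes n m" and o2: "o2 \<in> outcomes n m"
    and c: "card {i. i < n \<and> o1 ! i \<noteq> o2 ! i} = 1" by (auto simp: is_swap_def)
  from c obtain i where I: "{i. i < n \<and> o1 ! i \<noteq> o2 ! i} = {i}" by (auto simp: card_Suc_eq)
  then have i: "i < n" "o1 ! i \<noteq> o2 ! i" and oth: "\<And>j. j < n \<Longrightarrow> j \<noteq> i \<Longrightarrow> o1 ! j = o2 ! j"
    by auto
  have l: "length o1 = n" "length o2 = n" using o1 o2 by (auto simp: outcomes_def)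
  have m1: "o1 ! i < m" and m2: "o2 ! i < m" using o1 o2 i by (auto simp: outcomes_def)
  have e1: "o1 = o2[i := o1 ! i]" by (rule nth_equalityI) (auto simp: l i(1) nth_list_update oth)
  have e2: "o2 = o1[i := o2 ! i]" by (rule nth_equalityI) (auto simp: l i(1) nth_list_update oth)
  have same: "ord i o1 = ord i o2" using ord_upd[OF net o2 i(1) m1] e1 by simp
  have "total_on {0..<m} (ord i o2)" using net i o2 unfolding cpnet_def strict_linear_order_on_def by blast
  then have "(o1 ! i, o2 ! i) \<in> ord i o2 \<or> (o2 ! i, o1 ! i) \<in> ord i o2"
    using m1 m2 i(2) unfolding total_on_def by auto
  then show ?thesis
  proof
    assume "(o1 ! i, o2 ! i) \<in> ord i o2"
    then have "(o2, o1) \<in> improving_flip n m ord" unfolding improving_flip_def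
      using o2 i(1) m1 e1 by blast
    then show ?thesis by blast
  next
    assume "(o2 ! i, o1 ! i) \<in> ord i o2"
    then have "(o1, o2) \<in> improving_flip n m ord" unfolding improving_flip_def
      using o1 i(1) m2 e2 same by auto
    then show ?thesis by blast
  qed
qed

lemma swap_exactly_one:
  assumes net: "cpnet n m Pa ord" and acy: "cp_acyclic n Pa" and sw: "is_swap n m (o1, o2)"
  shows "cp_prefers n m ord o2 o1 \<longleftrightarrow> \<not> cp_prefers n m ord o1 o2"
proof -
  have "cp_prefers n m ord o2 o1 \<or> cp_prefers n m ord o1 o2"
    using swap_flip[OF net sw] unfolding cp_prefers_def by blast
  moreover have "\<not> (cp_prefers n m ord o2 o1 \<and> cp_prefers n m ord o1 o2)"
    using consistent[OF net acy, of o1] unfolding cp_prefers_def by (meson trancl_trans)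
  ultimately show ?thesis by blast
qed

definition rev_ord :: "(nat \<Rightarrow> nat list \<Rightarrow> (nat \<times> nat) set) \<Rightarrow> nat \<Rightarrow> nat list \<Rightarrow> (nat \<times> nat) set" where
  "rev_ord ord i u = (ord i u)\<inverse>"

lemma rev_cpnet:
  assumes net: "cpnet n m Pa ord"
  shows "cpnet n m Pa (rev_ord ord)"
proof -
  have "strict_linear_order_on {0..<m} ((ord i u)\<inverse>)" if "strict_linear_order_on {0..<m} (ord i u)" for i u
    using that unfolding strict_linear_order_on_def total_on_def irrefl_def
    by (auto simp: trans_def)
  moreover have "ord i u \<subseteq> {0..<m} \<times> {0..<m} \<Longrightarrow> (ord i u)\<inverse> \<subseteq> {0..<m} \<times> {0..<m}" for i u
    by auto
  moreover have "ord i u \<noteq> ord i u' \<Longrightarrow> (ord i u)\<inverse> \<noteq> (ord i u')\<inverse>" for i u u'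
    by simp
  ultimately show ?thesis using net unfolding cpnet_def rev_ord_def converse_inject
    apply (intro conjI)
    apply blast
    apply blast
    apply blast
    apply blast
    done
qed

lemma rev_flip:
  assumes net: "cpnet n m Pa ord"
  shows "improving_flip n m (rev_ord ord) = (improving_flip n m ord)\<inverse>"
proof (intro set_eqI iffI)
  fix p assume "p \<in> improving_flip n m (rev_ord ord)"
  then obtain u w i a where p: "p = (u, w)" "u \<in> outcomes n m" "i < n" "a < m" "w = u[i := a]"
    "(u ! i, a) \<in> ord i u" unfolding improving_flip_def rev_ord_def by auto
  have l: "length u = n" using p(2) by (simp add: outcomes_def)
  have w: "w \<in> outcomes n m" using upd_out p by simp
  have "u = w[i := u ! i]" using p l by simp
  moreover have "ord i w = ord i u" using ord_upd[OF net p(2) p(3) p(4)] p by simp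
  moreover have "u ! i < m" using p l by (simp add: outcomes_def)
  moreover have "w ! i = a" using p l by simp
  ultimately have "(w, u) \<in> improving_flip n m ord" unfolding improving_flip_def
    using w p(3) p(6) by auto
  then show "p \<in> (improving_flip n m ord)\<inverse>" using p by simp
next
  fix p assume "p \<in> (improving_flip n m ord)\<inverse>"
  then obtain u w i a where p: "p = (w, u)" "u \<in> outcomes n m" "i < n" "a < m" "w = u[i := a]"
    "(a, u ! i) \<in> ord i u" unfolding improving_flip_def by auto
  have l: "length u = n" using p(2) by (simp add: outcomes_def)
  have w: "w \<in> outcomes n m" using upd_out p by simp
  have "u = w[i := u ! i]" using p l by simp
  moreover have "ord i w = ord i u" using ord_upd[OF net p(2) p(3) p(4)] p by simp
  moreover have "u ! i < m" using p l by (simp add: outcomes_def)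
  moreover have "w ! i = a" using p l by simp
  ultimately show "p \<in> improving_flip n m (rev_ord ord)" unfolding improving_flip_def rev_ord_def
    using w p(1) p(3) p(6) by auto
qed

lemma compl_closed:
  assumes net: "cpnet n m Pa ord" and acy: "cp_acyclic n Pa" and kb: "k_bounded n k Pa"
    and X: "swap_space n m X"
  shows "X - cp_concept n m ord X \<in> C_ac n m k X"
proof -
  have "cp_concept n m (rev_ord ord) X = X - cp_concept n m ord X"
  proof (intro set_eqI iffI)
    fix x assume x: "x \<in> cp_concept n m (rev_ord ord) X"
    obtain a b where ab: "x = (a, b)" by fastforce
    have sw: "is_swap n m (a, b)" using X x ab unfolding swap_space_def cp_concept_def by auto
    have "cp_prefers n m ord b a" using x ab unfolding cp_concept_def cp_prefers_def rev_flip[OF net]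
      by (simp add: trancl_converse)
    then show "x \<in> X - cp_concept n m ord X" using swap_exactly_one[OF net acy sw] x ab
      unfolding cp_concept_def by auto
  next
    fix x assume x: "x \<in> X - cp_concept n m ord X"
    obtain a b where ab: "x = (a, b)" by fastforce
    have sw: "is_swap n m (a, b)" using X x ab unfolding swap_space_def cp_concept_def by auto
    have "cp_prefers n m ord b a" using swap_exactly_one[OF net acy sw] x ab
      unfolding cp_concept_def by auto
    then show "x \<in> cp_concept n m (rev_ord ord) X" using x ab unfolding cp_concept_def cp_prefers_def rev_flip[OF net]
      by (simp add: trancl_converse)
  qed
  then show ?thesis unfolding C_ac_def using rev_cpnet[OF net] acy kb by blast
qed



lemma shatters_mono: "C \<subseteq> C' \<Longrightarrow> shatters C S \<Longrightarrow> shatters C' S"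
  unfolding shatters_def by (meson subsetD)

lemma shatters_empty: "C \<noteq> {} \<Longrightarrow> shatters C {}"
  unfolding shatters_def by (metis Int_empty_right all_not_in_conv subset_empty)

lemma shatters_insert_compl:
  assumes CX: "C \<subseteq> Pow X" and ne: "C \<noteq> {}" and cc: "\<forall>c\<in>C. X - c \<in> C"
    and SX: "S \<subseteq> X" and sh: "shatters (insert c C) S"
  shows "shatters C S"
proof (rule ccontr)
  assume "\<not> shatters C S"
  then obtain T where T: "T \<subseteq> S" "\<forall>c'\<in>C. c' \<inter> S \<noteq> T" unfolding shatters_def by auto
  from sh T(1) obtain c1 where c1: "c1 \<in> insert c C" "c1 \<inter> S = T" unfolding shatters_def by auto
  have "c1 \<notin> C" using c1(2) T(2) by auto
  then have cT: "c \<inter> S = T" using c1 by auto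
  have "S - T \<subseteq> S" by blast
  from sh[unfolded shatters_def, rule_format, OF this]
  obtain c'' where c'': "c'' \<in> insert c C" "c'' \<inter> S = S - T" by (elim bexE)
  show False
  proof (cases "c'' \<in> C")
    case True
    then have "X - c'' \<in> C" using cc by auto
    moreover have "(X - c'') \<inter> S = T"
    proof -
      have "(X - c'') \<inter> S = S - (c'' \<inter> S)" using SX by blast
      also have "\<dots> = T" using c''(2) T(1) by blast
      finally show ?thesis .
    qed
    ultimately show False using T(2) by auto
  next
    case False
    then have "c'' = c" using c'' by auto
    then have "T = S - T" using cT c'' by simp
    then have "T = {}" by blast
    then have "S = {}" using \<open>T = S - T\<close> by blast
    obtain c0 where "c0 \<in> C" using ne by blast
    then show False using T(2) \<open>S = {}\<close> \<open>T = {}\<close> by blast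
  qed
qed

lemma vcdim_insert_compl:
  assumes CX: "C \<subseteq> Pow X" and ne: "C \<noteq> {}" and cc: "\<forall>c\<in>C. X - c \<in> C"
  shows "vcdim (insert c C) X = vcdim C X"
proof -
  have "{card S | S. S \<subseteq> X \<and> shatters (insert c C) S} = {card S | S. S \<subseteq> X \<and> shatters C S}"
  proof -
    have "\<And>S. S \<subseteq> X \<Longrightarrow> shatters (insert c C) S \<longleftrightarrow> shatters C S"
      using shatters_insert_compl[OF CX ne cc] shatters_mono[of C "insert c C"] by blast
    then show ?thesis by metis
  qed
  then show ?thesis unfolding vcdim_def by simp
qed

lemma vcdim_props:
  assumes fin: "finite X" and ne: "C \<noteq> {}"
  shows "\<And>S. S \<subseteq> X \<Longrightarrow> shatters C S \<Longrightarrow> card S \<le> vcdim C X"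
    and "\<exists>S. S \<subseteq> X \<and> shatters C S \<and> card S = vcdim C X"
proof -
  let ?M = "{card S | S. S \<subseteq> X \<and> shatters C S}"
  have f: "finite ?M" by (rule finite_subset[of _ "card ` Pow X"]) (use fin in auto)
  have n: "?M \<noteq> {}" using shatters_empty[OF ne] by blast
  show "\<And>S. S \<subseteq> X \<Longrightarrow> shatters C S \<Longrightarrow> card S \<le> vcdim C X"
    unfolding vcdim_def using f by (intro Max_ge) auto
  show "\<exists>S. S \<subseteq> X \<and> shatters C S \<and> card S = vcdim C X"
    using Max_in[OF f n] unfolding vcdim_def by auto
qed

lemma pascal_sum:
  "(\<Sum>i<Suc d. Suc N choose i) = (\<Sum>i<Suc d. N choose i) + (\<Sum>i<d. N choose i)"
  by (induction d) auto

lemma sauer: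
  assumes "finite X" and "C \<subseteq> Pow X" and "\<forall>S\<subseteq>X. shatters C S \<longrightarrow> card S < d"
  shows "card C \<le> (\<Sum>i<d. card X choose i)"
  using assms
proof (induction X arbitrary: C d rule: finite_induct)
  case empty
  show ?case
  proof (cases d)
    case 0
    have "C = {}"
    proof (rule ccontr)
      assume "C \<noteq> {}"
      then have "shatters C {}" by (rule shatters_empty)
      then have "card ({}::'a set) < d" using empty.prems(2)[rule_format, of "{}"] by simp
      then show False using 0 by simp
    qed
    then show ?thesis by simp
  next
    case (Suc d')
    have "C \<subseteq> {{}}" using empty by auto
    then have "card C \<le> 1" using card_mono[of "{{}}" C] by simp
    also have "1 \<le> (\<Sum>i<d. card {} choose i)" using Suc by (simp add: lessThan_Suc_atMost sum.atMost_shift)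
    finally show ?thesis .
  qed
next
  case (insert x F)
  show ?case
  proof (cases d)
    case 0
    have "C = {}"
    proof (rule ccontr)
      assume "C \<noteq> {}"
      then have "shatters C {}" by (rule shatters_empty)
      then have "card ({}::'a set) < d" using insert.prems(2)[rule_format, of "{}"] by simp
      then show False using 0 by simp
    qed
    then show ?thesis by simp
  next
    case (Suc d')
    define A where "A = {c\<in>C. x \<notin> c}"
    define B where "B = {c\<in>C. x \<in> c}"
    define g where "g = (\<lambda>c::'a set. c - {x})"
    define C1 where "C1 = g ` C"
    define C2 where "C2 = {c. c \<subseteq> F \<and> c \<in> C \<and> insert x c \<in> C}"
    have finC: "finite C" using insert.prems(1) insert.hyps(1) finite_subset by (metis finite_Pow_iff finite_insert)
    have CAB: "C = A \<union> B" "A \<inter> B = {}" unfolding A_def B_def by auto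
    have finA: "finite A" "finite B" using finC unfolding A_def B_def by auto
    have gA: "g ` A = A"
    proof -
      have "\<forall>c\<in>A. g c = c" unfolding g_def A_def by auto
      then have "g ` A = id ` A" by (intro image_cong) auto
      then show ?thesis by simp
    qed
    have C1eq: "C1 = A \<union> g ` B" unfolding C1_def using CAB(1) gA by (simp add: image_Un)
    have injB: "inj_on g B" unfolding inj_on_def g_def B_def by blast
    have C2eq: "A \<inter> g ` B = C2"
    proof (intro set_eqI iffI)
      fix c assume "c \<in> A \<inter> g ` B"
      then obtain b where b: "c \<in> C" "x \<notin> c" "b \<in> C" "x \<in> b" "c = b - {x}" unfolding A_def B_def g_def by blast
      then have "insert x c = b" by blast
      moreover have "c \<subseteq> F" using b insert.prems(1) by blast
      ultimately show "c \<in> C2" unfolding C2_def using b by blast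
    next
      fix c assume c: "c \<in> C2"
      then have "x \<notin> c" unfolding C2_def using insert.hyps(2) by blast
      then have "c = g (insert x c)" unfolding g_def by simp
      then show "c \<in> A \<inter> g ` B" using c \<open>x \<notin> c\<close> unfolding C2_def A_def B_def by blast
    qed
    have "card C = card A + card B" using CAB finA card_Un_disjoint by metis
    also have "card B = card (g ` B)" using injB by (simp add: card_image)
    also have "card A + card (g ` B) = card C1 + card C2"
      using card_Un_Int[of A "g ` B"] finA C1eq C2eq by simp
    finally have cardC: "card C = card C1 + card C2" .
    have C1F: "C1 \<subseteq> Pow F" using insert.prems(1) unfolding C1_def g_def by auto
    have C2F: "C2 \<subseteq> Pow F" unfolding C2_def by auto
    have sh1: "\<forall>S\<subseteq>F. shatters C1 S \<longrightarrow> card S < d"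
    proof (intro allI impI)
      fix S assume S: "S \<subseteq> F" "shatters C1 S"
      have "shatters C S" unfolding shatters_def
      proof (intro allI impI)
        fix T assume "T \<subseteq> S"
        then obtain c1 where "c1 \<in> C1" "c1 \<inter> S = T" using S(2) unfolding shatters_def by blast
        then obtain c where "c \<in> C" "(c - {x}) \<inter> S = T" unfolding C1_def g_def by blast
        moreover have "x \<notin> S" using S insert.hyps(2) by blast
        ultimately show "\<exists>c\<in>C. c \<inter> S = T" by blast
      qed
      then show "card S < d" using insert.prems(2) S(1) by blast
    qed
    have sh2: "\<forall>S\<subseteq>F. shatters C2 S \<longrightarrow> card S < d'"
    proof (intro allI impI)
      fix S assume S: "S \<subseteq> F" "shatters C2 S"
      have xS: "x \<notin> S" using S insert.hyps(2) by blast
      have "shatters C (insert x S)" unfolding shatters_def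
      proof (intro allI impI)
        fix T assume T: "T \<subseteq> insert x S"
        then obtain c2 where c2: "c2 \<in> C2" "c2 \<inter> S = T - {x}" using S(2) unfolding shatters_def
          by (metis Diff_subset_conv insert_is_Un)
        have xc2: "x \<notin> c2" using c2 insert.hyps(2) unfolding C2_def by blast
        show "\<exists>c\<in>C. c \<inter> insert x S = T"
        proof (cases "x \<in> T")
          case True
          have "insert x c2 \<inter> insert x S = T" using c2(2) True T by blast
          moreover have "insert x c2 \<in> C" using c2 unfolding C2_def by blast
          ultimately show ?thesis by blast
        next
          case False
          have "c2 \<inter> insert x S = T" using c2(2) False T xc2 by blast
          moreover have "c2 \<in> C" using c2 unfolding C2_def by blast
          ultimately show ?thesis by blast
        qed
      qed
      then have "card (insert x S) < d" using insert.prems(2) S(1) by blast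
      moreover have "card (insert x S) = Suc (card S)"
        using xS finite_subset[OF S(1) insert.hyps(1)] by simp
      ultimately show "card S < d'" using Suc by simp
    qed
    have "card C1 \<le> (\<Sum>i<d. card F choose i)" using insert.IH[OF C1F sh1] .
    moreover have "card C2 \<le> (\<Sum>i<d'. card F choose i)" using insert.IH[OF C2F sh2] .
    moreover have "(\<Sum>i<d. card (insert x F) choose i) = (\<Sum>i<d. card F choose i) + (\<Sum>i<d'. card F choose i)"
      using insert.hyps Suc pascal_sum by simp
    ultimately show ?thesis using cardC by linarith
  qed
qed

lemma not_maximum_compl:
  assumes fin: "finite X" and CX: "C \<subseteq> Pow X" and ne: "C \<noteq> {}" and cc: "\<forall>c\<in>C. X - c \<in> C"
    and nsh: "\<not> shatters C X"
  shows "\<not> maximum_class C X"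
proof -
  define d where "d = vcdim C X"
  define N where "N = card X"
  have le: "\<And>S. S \<subseteq> X \<Longrightarrow> shatters C S \<Longrightarrow> card S \<le> d" using vcdim_props(1)[OF fin ne] d_def by blast
  obtain S0 where S0: "S0 \<subseteq> X" "shatters C S0" "card S0 = d" using vcdim_props(2)[OF fin ne] d_def by blast
  have "d < N"
  proof (rule ccontr)
    assume "\<not> d < N"
    then have "card X \<le> card S0" using S0 N_def by simp
    then have "S0 = X" using card_seteq[OF fin S0(1)] by blast
    then show False using S0 nsh by simp
  qed
  have "X \<noteq> {}" using \<open>d < N\<close> N_def by auto
  then obtain x0 where x0: "x0 \<in> X" by blast
  define C' where "C' = {c\<in>C. x0 \<notin> c}"
  have C'X: "C' \<subseteq> Pow (X - {x0})" using CX unfolding C'_def by auto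
  have sh: "\<forall>S\<subseteq>X - {x0}. shatters C' S \<longrightarrow> card S < d"
  proof (intro allI impI)
    fix S assume S: "S \<subseteq> X - {x0}" "shatters C' S"
    have "shatters C (insert x0 S)" unfolding shatters_def
    proof (intro allI impI)
      fix T assume T: "T \<subseteq> insert x0 S"
      show "\<exists>c\<in>C. c \<inter> insert x0 S = T"
      proof (cases "x0 \<in> T")
        case True
        obtain c' where c': "c' \<in> C'" "c' \<inter> S = S - T" using S(2) unfolding shatters_def by (meson Diff_subset)
        have "X - c' \<in> C" using c' cc unfolding C'_def by blast
        moreover have "(X - c') \<inter> insert x0 S = T" using c' True T S(1) x0 unfolding C'_def by blast
        ultimately show ?thesis by blast
      next
        case False
        then have "T \<subseteq> S" using T by blast
        then obtain c' where c': "c' \<in> C'" "c' \<inter> S = T" using S(2) unfolding shatters_def by blast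
        then have "c' \<inter> insert x0 S = T" unfolding C'_def by blast
        then show ?thesis using c' unfolding C'_def by blast
      qed
    qed
    then have "card (insert x0 S) \<le> d" using le S(1) x0 by blast
    moreover have "card (insert x0 S) = Suc (card S)"
    proof -
      have "x0 \<notin> S" using S(1) by blast
      moreover have "finite S" using S(1) fin by (meson Diff_subset finite_subset subset_trans)
      ultimately show ?thesis by simp
    qed
    ultimately show "card S < d" by simp
  qed
  have finX': "finite (X - {x0})" using fin by simp
  have cC': "card C' \<le> (\<Sum>i<d. (N - 1) choose i)"
    using sauer[OF finX' C'X sh] x0 fin N_def by simp
  have finC: "finite C" using CX fin by (meson finite_Pow_iff finite_subset)
  have Ceq: "C = C' \<union> (\<lambda>c. X - c) ` C'"
  proof (intro set_eqI iffI)
    fix c assume c: "c \<in> C"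
    show "c \<in> C' \<union> (\<lambda>c. X - c) ` C'"
    proof (cases "x0 \<in> c")
      case True
      have "X - c \<in> C'" using c cc True unfolding C'_def by blast
      moreover have "c = X - (X - c)" using c CX by blast
      ultimately show ?thesis by blast
    next
      case False then show ?thesis using c unfolding C'_def by blast
    qed
  next
    fix c assume "c \<in> C' \<union> (\<lambda>c. X - c) ` C'"
    then show "c \<in> C" using cc unfolding C'_def by blast
  qed
  have disj: "C' \<inter> (\<lambda>c. X - c) ` C' = {}" using x0 unfolding C'_def by blast
  have inj: "inj_on (\<lambda>c. X - c) C'" using CX unfolding inj_on_def C'_def by blast
  have finC': "finite C'" using finC unfolding C'_def by simp
  have "card C = card C' + card ((\<lambda>c. X - c) ` C')"
    using Ceq disj finC' card_Un_disjoint by (metis finite_imageI)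
  then have cardC: "card C = 2 * card C'" using card_image[OF inj] by simp
  have N1: "N = Suc (N - 1)" using \<open>d < N\<close> by simp
  have "(\<Sum>i\<le>d. N choose i) = (\<Sum>i<Suc d. Suc (N - 1) choose i)"
    using N1 lessThan_Suc_atMost by metis
  also have "\<dots> = (\<Sum>i<Suc d. (N - 1) choose i) + (\<Sum>i<d. (N - 1) choose i)" by (rule pascal_sum)
  also have "\<dots> = 2 * (\<Sum>i<d. (N - 1) choose i) + ((N - 1) choose d)" by simp
  finally have eq: "(\<Sum>i\<le>d. N choose i) = 2 * (\<Sum>i<d. (N - 1) choose i) + ((N - 1) choose d)" .
  have "(N - 1) choose d > 0" using \<open>d < N\<close> by simp
  then have "card C < (\<Sum>i\<le>d. N choose i)" using eq cardC cC' by linarith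
  then show ?thesis unfolding maximum_class_def d_def[symmetric] N_def[symmetric] by simp
qed

lemma finite_outcomes: "finite (outcomes n m)"
proof (rule finite_subset)
  show "outcomes n m \<subseteq> {xs. set xs \<subseteq> {0..<m} \<and> length xs = n}"
    unfolding outcomes_def by (auto simp: in_set_conv_nth)
  show "finite {xs. set xs \<subseteq> {0..<m} \<and> length xs = n}"
    by (rule finite_lists_length_eq) simp
qed

lemma swap_finite: "swap_space n m X \<Longrightarrow> finite X"
proof (rule finite_subset)
  assume "swap_space n m X"
  then show "X \<subseteq> outcomes n m \<times> outcomes n m"
    unfolding swap_space_def is_swap_def by auto
  show "finite (outcomes n m \<times> outcomes n m)" using finite_outcomes by simp
qed

lemma is_swap_intro:
  assumes "x \<in> outcomes n m" "y \<in> outcomes n m" "j < n" "x ! j \<noteq> y ! j"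
    "\<And>i. i < n \<Longrightarrow> i \<noteq> j \<Longrightarrow> x ! i = y ! i"
  shows "is_swap n m (x, y)"
proof -
  have "{i. i < n \<and> x ! i \<noteq> y ! i} = {j}" using assms by auto
  then show ?thesis using assms unfolding is_swap_def by simp
qed

lemma is_swap_sym: "is_swap n m (x, y) \<Longrightarrow> is_swap n m (y, x)"
  unfolding is_swap_def by (simp add: eq_commute)

lemma forced:
  assumes net: "cpnet n m Pa ord" and acy: "cp_acyclic n Pa" and X: "swap_space n m X"
    and conc: "cp_concept n m ord X = X \<inter> P"
    and pq: "(p, q) \<in> P" "(q, p) \<notin> P" and sw: "is_swap n m (p, q)"
  shows "(q, p) \<in> (improving_flip n m ord)\<^sup>+"
proof (cases "(p, q) \<in> X")
  case True
  then have "(p, q) \<in> cp_concept n m ord X" using conc pq by simp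
  then show ?thesis unfolding cp_concept_def cp_prefers_def by simp
next
  case False
  then have "(q, p) \<in> X" using X sw unfolding swap_space_def by blast
  then have "(q, p) \<notin> cp_concept n m ord X" using conc pq by simp
  then have "\<not> cp_prefers n m ord q p" using \<open>(q, p) \<in> X\<close> unfolding cp_concept_def by simp
  then have "cp_prefers n m ord p q" using swap_exactly_one[OF net acy is_swap_sym[OF sw]] by simp
  then show ?thesis unfolding cp_prefers_def by simp
qed

lemma trivial_net_in: "cp_concept n m (\<lambda>i u. {(a, b). a < b \<and> b < m}) X \<in> C_ac n m k X"
proof -
  have "cpnet n m (\<lambda>_. {}) (\<lambda>i u. {(a, b). a < b \<and> b < m})"
    unfolding cpnet_def strict_linear_order_on_def trans_def irrefl_def total_on_def
    by (auto simp: linorder_neq_iff)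
  moreover have "cp_acyclic n (\<lambda>_. {})" unfolding cp_acyclic_def by (simp add: acyclic_def)
  moreover have "k_bounded n k (\<lambda>_. {})" unfolding k_bounded_def by simp
  ultimately show ?thesis unfolding C_ac_def by blast
qed

lemma bad_concept:
  assumes n: "n \<ge> 1" and m: "m \<ge> 2" and kn: "k \<le> n - 1" and mk: "(m, k) \<noteq> (2, 0)"
    and X: "swap_space n m X"
  shows "\<exists>c. c \<subseteq> X \<and> c \<notin> C_ac n m k X"
proof (cases "m \<ge> 3")
  case True
  define z where "z = replicate n (0::nat)"
  define u1 where "u1 = z[0 := 1]"
  define u2 where "u2 = z[0 := 2]"
  define P where "P = {(u1, z), (u2, u1), (z, u2)}"
  have oz: "z \<in> outcomes n m" using m unfolding z_def outcomes_def by auto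
  have o1: "u1 \<in> outcomes n m" using upd_out[OF oz, of 1 0] m unfolding u1_def by simp
  have o2: "u2 \<in> outcomes n m" using upd_out[OF oz, of 2 0] True unfolding u2_def by simp
  have lz: "length z = n" unfolding z_def by simp
  have v: "z ! 0 = 0" "u1 ! 0 = 1" "u2 ! 0 = 2" using n lz unfolding u1_def u2_def z_def by auto
  have w: "\<And>i. i \<noteq> 0 \<Longrightarrow> u1 ! i = z ! i" "\<And>i. i \<noteq> 0 \<Longrightarrow> u2 ! i = z ! i"
    unfolding u1_def u2_def by auto
  have d: "u1 \<noteq> z" "u2 \<noteq> u1" "z \<noteq> u2" using v by auto
  have s1: "is_swap n m (u1, z)" using is_swap_intro[OF o1 oz, of 0] n v w by auto
  have s2: "is_swap n m (u2, u1)" using is_swap_intro[OF o2 o1, of 0] n v w by auto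
  have s3: "is_swap n m (z, u2)" using is_swap_intro[OF oz o2, of 0] n v w by auto
  have "X \<inter> P \<notin> C_ac n m k X"
  proof
    assume "X \<inter> P \<in> C_ac n m k X"
    then obtain Pa ord where net: "cpnet n m Pa ord" and acy: "cp_acyclic n Pa"
      and conc: "cp_concept n m ord X = X \<inter> P" unfolding C_ac_def by auto
    have "(z, u1) \<in> (improving_flip n m ord)\<^sup>+"
      by (rule forced[OF net acy X conc _ _ s1]) (use d in \<open>auto simp: P_def\<close>)
    moreover have "(u1, u2) \<in> (improving_flip n m ord)\<^sup>+"
      by (rule forced[OF net acy X conc _ _ s2]) (use d in \<open>auto simp: P_def\<close>)
    moreover have "(u2, z) \<in> (improving_flip n m ord)\<^sup>+"
      by (rule forced[OF net acy X conc _ _ s3]) (use d in \<open>auto simp: P_def\<close>)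
    ultimately have "(z, z) \<in> (improving_flip n m ord)\<^sup>+" by (meson trancl_trans)
    then show False using consistent[OF net acy] by blast
  qed
  then show ?thesis by (intro exI[of _ "X \<inter> P"]) simp
next
  case False
  then have m2: "m = 2" using m by simp
  then have "k \<ge> 1" using mk by (cases k) auto
  then have n2: "n \<ge> 2" using kn by simp
  define z where "z = replicate n (0::nat)"
  define a where "a = z[0 := 1]"
  define b where "b = a[1 := 1]"
  define e where "e = z[1 := 1]"
  define P where "P = {(a, z), (b, a), (e, b), (z, e)}"
  have lz: "length z = n" unfolding z_def by simp
  have oz: "z \<in> outcomes n m" using m unfolding z_def outcomes_def by auto
  have oa: "a \<in> outcomes n m" using upd_out[OF oz, of 1 0] m unfolding a_def by simp
  have ob: "b \<in> outcomes n m" using upd_out[OF oa, of 1 1] m unfolding b_def by simp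
  have oe: "e \<in> outcomes n m" using upd_out[OF oz, of 1 1] m unfolding e_def by simp
  have v: "z ! 0 = 0" "z ! 1 = 0" "a ! 0 = 1" "a ! 1 = 0" "b ! 0 = 1" "b ! 1 = 1" "e ! 0 = 0" "e ! 1 = 1"
    using n2 lz unfolding a_def b_def e_def z_def by auto
  have w: "\<And>i. i \<noteq> 0 \<Longrightarrow> i \<noteq> 1 \<Longrightarrow> a ! i = z ! i \<and> b ! i = z ! i \<and> e ! i = z ! i"
    unfolding a_def b_def e_def by auto
  have d: "a \<noteq> z" "b \<noteq> a" "e \<noteq> b" "z \<noteq> e" "a \<noteq> e" "z \<noteq> b" using v by auto
  have wa: "\<And>i. i \<noteq> 0 \<Longrightarrow> a ! i = z ! i" unfolding a_def by simp
  have s1: "is_swap n m (a, z)" using is_swap_intro[OF oa oz, of 0] n2 v wa by auto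
  have s2: "is_swap n m (b, a)" using is_swap_intro[OF ob oa, of 1] n2 v w
    by (metis One_nat_def less_2_cases_iff less_le_trans zero_neq_one)
  have s3: "is_swap n m (e, b)" using is_swap_intro[OF oe ob, of 0] n2 v w
    by (metis less_2_cases_iff less_le_trans zero_neq_one)
  have s4: "is_swap n m (z, e)" using is_swap_intro[OF oz oe, of 1] n2 v w
    by (metis One_nat_def less_2_cases_iff less_le_trans zero_neq_one)
  have "X \<inter> P \<notin> C_ac n m k X"
  proof
    assume "X \<inter> P \<in> C_ac n m k X"
    then obtain Pa ord where net: "cpnet n m Pa ord" and acy: "cp_acyclic n Pa"
      and conc: "cp_concept n m ord X = X \<inter> P" unfolding C_ac_def by auto
    have "(z, a) \<in> (improving_flip n m ord)\<^sup>+"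
      by (rule forced[OF net acy X conc _ _ s1]) (use d in \<open>auto simp: P_def\<close>)
    moreover have "(a, b) \<in> (improving_flip n m ord)\<^sup>+"
      by (rule forced[OF net acy X conc _ _ s2]) (use d in \<open>auto simp: P_def\<close>)
    moreover have "(b, e) \<in> (improving_flip n m ord)\<^sup>+"
      by (rule forced[OF net acy X conc _ _ s3]) (use d in \<open>auto simp: P_def\<close>)
    moreover have "(e, z) \<in> (improving_flip n m ord)\<^sup>+"
      by (rule forced[OF net acy X conc _ _ s4]) (use d in \<open>auto simp: P_def\<close>)
    ultimately have "(z, z) \<in> (improving_flip n m ord)\<^sup>+" by (meson trancl_trans)
    then show False using consistent[OF net acy] by blast
  qed
  then show ?thesis by (intro exI[of _ "X \<inter> P"]) simp
qed

theorem proposition4: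
  fixes n m k :: nat and X :: "(nat list \<times> nat list) set"
  assumes "n \<ge> 1" and "m \<ge> 2" and "k \<le> n - 1" and "(m, k) \<noteq> (2, 0)"
    and "swap_space n m X"
  shows "\<not> maximal_class (C_ac n m k X) X \<and> \<not> maximum_class (C_ac n m k X) X"
proof -
  let ?C = "C_ac n m k X"
  have fin: "finite X" using swap_finite[OF assms(5)] .
  have CX: "?C \<subseteq> Pow X" unfolding C_ac_def cp_concept_def by auto
  have ne: "?C \<noteq> {}" using trivial_net_in by blast
  have cc: "\<forall>c\<in>?C. X - c \<in> ?C"
  proof
    fix c assume "c \<in> ?C"
    then obtain Pa ord where "c = cp_concept n m ord X" "cpnet n m Pa ord" "cp_acyclic n Pa" "k_bounded n k Pa"
      unfolding C_ac_def by auto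
    then show "X - c \<in> ?C" using compl_closed[OF _ _ _ assms(5)] by blast
  qed
  obtain c0 where c0: "c0 \<subseteq> X" "c0 \<notin> ?C" using bad_concept[OF assms] by blast
  have "\<not> maximal_class ?C X"
    unfolding maximal_class_def using c0 vcdim_insert_compl[OF CX ne cc, of c0] by auto
  moreover have "\<not> shatters ?C X"
  proof
    assume "shatters ?C X"
    then obtain c where "c \<in> ?C" "c \<inter> X = c0" using c0(1) unfolding shatters_def by blast
    moreover have "c \<subseteq> X" using CX \<open>c \<in> ?C\<close> by blast
    ultimately show False using c0(2) by (metis inf.absorb1)
  qed
  then have "\<not> maximum_class ?C X" using not_maximum_compl[OF fin CX ne cc] by blast
  ultimately show ?thesis by blast
qed

end
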